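(* Let $G$ be a $d$-regular graph on $n$ vertices and let $k$ be a positive integer with $NPO(k)\le n< NPO(k+1)$. Then the Laplacian matrix $L(G)$ has at least $k$ eigenvalues (counted with multiplicity) that are greater than or equal to $d$.
   Context: All graphs are finite, simple, unweighted and undirected; $A(G)$ is the adjacency matrix and $L(G)=D(G)-A(G)$ the Laplacian, where $D(G)$ is the diagonal matrix of degrees. For a positive integer $k$, $NPO(k)$ is the smallest integer $n$ such that the adjacency matrix of every graph with at least $n$ vertices has at least $k$ nonpositive eigenvalues (counted with multiplicity). *)

theory Defs
  imports "Jordan_Normal_Form.Char_Poly"
begin

text \<open>A finite simple graph on the vertex set {0..<n}, given by an edge relation E
  (only its restriction to {0..<n} matters): symmetric and irreflexive.\<close>
definition simple_graph :: "nat \<Rightarrow> (nat \<Rightarrow> nat \<Rightarrow> bool) \<Rightarrow> bool" where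
  "simple_graph n E \<longleftrightarrow> (\<forall>i<n. \<forall>j<n. E i j \<longrightarrow> E j i) \<and> (\<forall>i<n. \<not> E i i)"

definition degree :: "nat \<Rightarrow> (nat \<Rightarrow> nat \<Rightarrow> bool) \<Rightarrow> nat \<Rightarrow> nat" where
  "degree n E i = card {j. j < n \<and> E i j}"

definition regular :: "nat \<Rightarrow> (nat \<Rightarrow> nat \<Rightarrow> bool) \<Rightarrow> nat \<Rightarrow> bool" where
  "regular n E d \<longleftrightarrow> (\<forall>i<n. degree n E i = d)"

definition adj_mat :: "nat \<Rightarrow> (nat \<Rightarrow> nat \<Rightarrow> bool) \<Rightarrow> real mat" where
  "adj_mat n E = mat n n (\<lambda>(i, j). if E i j then 1 else 0)"

definition deg_mat :: "nat \<Rightarrow> (nat \<Rightarrow> nat \<Rightarrow> bool) \<Rightarrow> real mat" where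
  "deg_mat n E = mat n n (\<lambda>(i, j). if i = j then real (degree n E i) else 0)"

definition lap_mat :: "nat \<Rightarrow> (nat \<Rightarrow> nat \<Rightarrow> bool) \<Rightarrow> real mat" where
  "lap_mat n E = deg_mat n E - adj_mat n E"

definition num_eigs :: "(real \<Rightarrow> bool) \<Rightarrow> real mat \<Rightarrow> nat" where
  "num_eigs P A = size (filter_mset P (proots (char_poly A)))"

definition NPO :: "nat \<Rightarrow> nat" where
  "NPO k = (LEAST n. \<forall>m\<ge>n. \<forall>E. simple_graph m E \<longrightarrow> k \<le> num_eigs (\<lambda>x. x \<le> 0) (adj_mat m E))"

end

theory Submission
  imports Defs "Jordan_Normal_Form.Schur_Decomposition" "Jordan_Normal_Form.DL_Rank" "HOL-Library.Ramsey"
begin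

lemma complex_eigenvalue_exists:
  assumes A: "(A :: complex mat) \<in> carrier_mat n n" and n: "n > 0"
  shows "\<exists>v l. v \<in> carrier_vec n \<and> v \<noteq> 0\<^sub>v n \<and> A *\<^sub>v v = l \<cdot>\<^sub>v v"
proof -
  from char_poly_factorized[OF A] obtain as where
    cp: "char_poly A = (\<Prod>a\<leftarrow>as. [:- a, 1:])" and len: "length as = n" by auto
  from len n obtain l rest where as: "as = l # rest" by (cases as, auto)
  have "poly (char_poly A) l = 0" unfolding cp as by simp
  hence "eigenvalue A l" using eigenvalue_root_char_poly[OF A] by simp
  then obtain v where "eigenvector A v l" unfolding eigenvalue_def by auto
  thus ?thesis unfolding eigenvector_def using A by auto
qed

lemma real_sym_eigenvector:
  fixes A :: "real mat"
  assumes A: "A \<in> carrier_mat n n" and sym: "\<And>i j. i < n \<Longrightarrow> j < n \<Longrightarrow> A $$ (i,j) = A $$ (j,i)"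
    and n: "n > 0"
  shows "\<exists>v e. v \<in> carrier_vec n \<and> v \<noteq> 0\<^sub>v n \<and> A *\<^sub>v v = e \<cdot>\<^sub>v v"
proof -
  define Ac where "Ac = map_mat complex_of_real A"
  have Ac: "Ac \<in> carrier_mat n n" using A unfolding Ac_def by auto
  from complex_eigenvalue_exists[OF Ac n] obtain v l where
    v: "v \<in> carrier_vec n" and v0: "v \<noteq> 0\<^sub>v n" and ev: "Ac *\<^sub>v v = l \<cdot>\<^sub>v v" by auto
  have evi: "(\<Sum>j<n. complex_of_real (A $$ (i,j)) * v $ j) = l * v $ i" if i: "i < n" for i
  proof -
    have "(Ac *\<^sub>v v) $ i = l * v $ i" using ev i v by simp
    moreover have "(Ac *\<^sub>v v) $ i = (\<Sum>j<n. complex_of_real (A $$ (i,j)) * v $ j)"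
      using i A v unfolding Ac_def by (auto simp: mult_mat_vec_def scalar_prod_def lessThan_atLeast0 intro!: sum.cong)
    ultimately show ?thesis by simp
  qed
  define r where "r = (\<Sum>i<n. cnj (v $ i) * v $ i)"
  define s where "s = (\<Sum>i<n. cnj (v $ i) * (\<Sum>j<n. complex_of_real (A $$ (i,j)) * v $ j))"
  have "s = (\<Sum>i<n. cnj (v $ i) * (l * v $ i))" unfolding s_def
    by (rule sum.cong, auto simp: evi)
  hence s1: "s = l * r" unfolding r_def by (simp add: sum_distrib_left mult.commute mult.left_commute)
  have "cnj s = (\<Sum>i<n. v $ i * (\<Sum>j<n. complex_of_real (A $$ (i,j)) * cnj (v $ j)))"
    unfolding s_def by (simp add: mult.commute)
  also have "\<dots> = (\<Sum>i<n. \<Sum>j<n. v $ i * complex_of_real (A $$ (i,j)) * cnj (v $ j))"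
    by (simp add: sum_distrib_left mult.assoc)
  also have "\<dots> = (\<Sum>j<n. \<Sum>i<n. v $ i * complex_of_real (A $$ (i,j)) * cnj (v $ j))"
    by (rule sum.swap)
  also have "\<dots> = s" unfolding s_def sum_distrib_left
    by (intro sum.cong refl, subst sym, auto simp: mult.commute mult.left_commute)
  finally have s2: "cnj s = s" .
  have rreal: "r = complex_of_real (\<Sum>i<n. (cmod (v $ i))^2)"
    unfolding r_def of_real_sum by (intro sum.cong refl) (metis complex_norm_square mult.commute of_real_power)
  obtain i where i: "i < n" and vi: "v $ i \<noteq> 0" using v0 v
    by (metis carrier_vecD eq_vecI index_zero_vec(1) index_zero_vec(2))
  have "(\<Sum>i<n. (cmod (v $ i))^2) > 0"
  proof -
    have "(\<Sum>i<n. (cmod (v $ i))^2) \<ge> (cmod (v $ i))^2"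
      using i by (intro member_le_sum) auto
    moreover have "(cmod (v $ i))^2 > 0" using vi by simp
    ultimately show ?thesis by linarith
  qed
  hence r0: "r \<noteq> 0" unfolding rreal by (metis less_irrefl of_real_eq_0_iff)
  have "cnj l * cnj r = l * r" using s1 s2 by (metis complex_cnj_mult)
  moreover have "cnj r = r" unfolding rreal by (simp only: complex_cnj_complex_of_real)
  ultimately have "cnj l = l" using r0 by simp
  hence lreal: "Im l = 0" by (metis complex_cnj_cancel_iff Reals_cnj_iff complex_is_Real_iff)
  define e where "e = Re l"
  have lcoe: "l = complex_of_real e" unfolding e_def using lreal by (simp add: complex_eq_iff)
  define vr where "vr = vec n (\<lambda>i. Re (v $ i))"
  define vi' where "vi' = vec n (\<lambda>i. Im (v $ i))"
  have rowi: "(\<Sum>j<n. A $$ (i,j) * Re (v $ j)) = e * Re (v $ i) \<and>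
        (\<Sum>j<n. A $$ (i,j) * Im (v $ j)) = e * Im (v $ i)" if i: "i < n" for i
  proof -
    have "Re (\<Sum>j<n. complex_of_real (A $$ (i,j)) * v $ j) = Re (l * v $ i)" using evi[OF i] by simp
    moreover have "Im (\<Sum>j<n. complex_of_real (A $$ (i,j)) * v $ j) = Im (l * v $ i)" using evi[OF i] by simp
    ultimately show ?thesis unfolding lcoe by (simp add: Re_sum Im_sum)
  qed
  have mv: "A *\<^sub>v w = e \<cdot>\<^sub>v w" if w: "w = vr \<or> w = vi'" for w
  proof (rule eq_vecI)
    show "dim_vec (A *\<^sub>v w) = dim_vec (e \<cdot>\<^sub>v w)" using A w unfolding vr_def vi'_def by auto
    fix i assume "i < dim_vec (e \<cdot>\<^sub>v w)"
    hence i: "i < n" using w unfolding vr_def vi'_def by auto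
    have "(A *\<^sub>v w) $ i = (\<Sum>j<n. A $$ (i,j) * w $ j)"
      using i A w unfolding vr_def vi'_def by (auto simp: mult_mat_vec_def scalar_prod_def lessThan_atLeast0 intro!: sum.cong)
    also have "\<dots> = e * w $ i" using rowi[OF i] w i unfolding vr_def vi'_def
      by (auto intro!: sum.cong)
    finally show "(A *\<^sub>v w) $ i = (e \<cdot>\<^sub>v w) $ i" using i w unfolding vr_def vi'_def by auto
  qed
  show ?thesis
  proof (cases "Re (v $ i) = 0")
    case True
    hence "Im (v $ i) \<noteq> 0" using vi by (simp add: complex_eq_iff)
    hence "vi' \<noteq> 0\<^sub>v n" using i unfolding vi'_def by (metis index_vec index_zero_vec(1))
    thus ?thesis using mv[of vi'] unfolding vi'_def by (metis vec_carrier)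
  next
    case False
    hence "vr \<noteq> 0\<^sub>v n" using i unfolding vr_def by (metis index_vec index_zero_vec(1))
    thus ?thesis using mv[of vr] unfolding vr_def by (metis vec_carrier)
  qed
qed


lemma conjugate_real_vec[simp]: "conjugate (w :: real vec) = w"
  by (rule eq_vecI, auto)

lemma orth_extend:
  fixes v :: "real vec"
  assumes v: "v \<in> carrier_vec n" and vv: "v \<bullet> v = 1"
  shows "\<exists>W \<in> carrier_mat n n. transpose_mat W * W = 1\<^sub>m n \<and> col W 0 = v"
proof -
  have v0: "v \<noteq> 0\<^sub>v n" using vv v by auto
  interpret cof_vec_space n "TYPE(real)" .
  define b where "b = basis_completion v"
  from basis_completion[OF v v0, folded b_def]
  have dist_b: "distinct b" and indep: "\<not> lin_dep (set b)" and b: "set b \<subseteq> carrier_vec n"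
    and hdb: "hd b = v" and len_b: "length b = n" by auto
  have n: "n \<noteq> 0" using v0 v by auto
  from hdb len_b n obtain vs where bv: "b = v # vs" by (cases b, auto)
  define ws where "ws = gram_schmidt n b"
  from gram_schmidt_result[OF b dist_b indep ws_def]
  have ws: "set ws \<subseteq> carrier_vec n" "corthogonal ws" "length ws = n" 
    by (auto simp: len_b)
  from gram_schmidt_hd[OF v, of vs, folded bv] have hdws: "hd ws = v" unfolding ws_def .
  define us where "us = map (\<lambda>w. (1 / sqrt (w \<bullet> w)) \<cdot>\<^sub>v w) ws"
  have len_us: "length us = n" unfolding us_def using ws by simp
  have us_car: "us ! i \<in> carrier_vec n" if "i < n" for i
    using ws that unfolding us_def by auto
  have wsww: "ws ! i \<bullet> ws ! j = 0 \<longleftrightarrow> i \<noteq> j" if "i < n" "j < n" for i j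
    using corthogonalD[OF ws(2), of i j] that ws(3) by simp
  have orth: "us ! i \<bullet> us ! j = (if i = j then 1 else 0)" if ij: "i < n" "j < n" for i j
  proof -
    have wi: "ws ! i \<in> carrier_vec n" "ws ! j \<in> carrier_vec n" using ws ij by auto
    have "us ! i \<bullet> us ! j = (1 / sqrt (ws!i \<bullet> ws!i)) * (1 / sqrt (ws!j \<bullet> ws!j)) * (ws ! i \<bullet> ws ! j)"
      unfolding us_def using ij ws wi by (simp add: smult_scalar_prod_distrib scalar_prod_smult_distrib)
    moreover have pos: "ws ! i \<bullet> ws ! i > 0"
    proof -
      have "ws ! i \<bullet> ws ! i \<ge> 0"
        using wi unfolding scalar_prod_def by (auto intro!: sum_nonneg)
      moreover have "ws ! i \<bullet> ws ! i \<noteq> 0" using wsww[OF ij(1) ij(1)] by simp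
      ultimately show ?thesis by simp
    qed
    ultimately show ?thesis using wsww[OF ij] 
      by (auto simp: real_sqrt_mult[symmetric] field_simps)
  qed
  define W where "W = mat_of_cols n us"
  have W: "W \<in> carrier_mat n n" unfolding W_def using len_us by (metis mat_of_cols_carrier(1))
  have colW: "col W j = us ! j" if "j < n" for j
    unfolding W_def using that len_us us_car by simp
  have "transpose_mat W * W = 1\<^sub>m n"
    by (rule eq_matI, insert W colW orth, auto)
  moreover have "col W 0 = v"
  proof -
    have "ws ! 0 = v" using hdws ws(3) n by (metis hd_conv_nth list.size(3))
    hence "us ! 0 = (1 / sqrt (v \<bullet> v)) \<cdot>\<^sub>v v" unfolding us_def using ws(3) n by simp
    also have "\<dots> = v" using vv by simp
    finally show ?thesis using colW[of 0] n by simp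
  qed
  ultimately show ?thesis using W by blast
qed


definition diagm :: "real list \<Rightarrow> real mat" where
  "diagm es = mat (length es) (length es) (\<lambda>(i,j). if i = j then es ! i else 0)"

lemma diagm_carrier[simp]: "diagm es \<in> carrier_mat (length es) (length es)"
  unfolding diagm_def by auto

lemma spectral:
  fixes A :: "real mat"
  assumes "A \<in> carrier_mat n n" and "transpose_mat A = A"
  shows "\<exists>P es. P \<in> carrier_mat n n \<and> length es = n \<and> transpose_mat P * P = 1\<^sub>m n \<and>
    P * transpose_mat P = 1\<^sub>m n \<and> transpose_mat P * A * P = diagm es"
  using assms
proof (induction n arbitrary: A)
  case 0
  show ?case
    by (rule exI[of _ "1\<^sub>m 0"], rule exI[of _ "[]"], insert 0, auto intro!: eq_matI simp: diagm_def)
next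
  case (Suc m A)
  let ?n = "Suc m"
  have A: "A \<in> carrier_mat ?n ?n" by fact
  have sym: "A $$ (i,j) = A $$ (j,i)" if "i < ?n" "j < ?n" for i j
    using Suc.prems(2) that A by (metis carrier_matD index_transpose_mat(1))
  obtain v0 e where v0: "v0 \<in> carrier_vec ?n" "v0 \<noteq> 0\<^sub>v ?n" and ev0: "A *\<^sub>v v0 = e \<cdot>\<^sub>v v0"
    using real_sym_eigenvector[OF A sym] by auto
  have v0pos: "v0 \<bullet> v0 > 0"
  proof -
    obtain i where i: "i < ?n" "v0 $ i \<noteq> 0" using v0
      by (metis carrier_vecD eq_vecI index_zero_vec(1) index_zero_vec(2))
    have "v0 \<bullet> v0 = (\<Sum>j<?n. v0 $ j * v0 $ j)" using v0 unfolding scalar_prod_def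
      by (simp add: lessThan_atLeast0)
    also have "\<dots> \<ge> v0 $ i * v0 $ i" using i by (intro member_le_sum) auto
    finally show ?thesis using i by (smt (verit) not_real_square_gt_zero)
  qed
  define v where "v = (1 / sqrt (v0 \<bullet> v0)) \<cdot>\<^sub>v v0"
  have v: "v \<in> carrier_vec ?n" unfolding v_def using v0 by auto
  have vv: "v \<bullet> v = 1" unfolding v_def using v0 v0pos
    by (simp add: smult_scalar_prod_distrib scalar_prod_smult_distrib real_sqrt_mult[symmetric] field_simps)
  have ev: "A *\<^sub>v v = e \<cdot>\<^sub>v v" unfolding v_def using ev0 v0 A
    by (simp add: mult_mat_vec smult_smult_assoc mult.commute)
  obtain W where W: "W \<in> carrier_mat ?n ?n" and WW: "transpose_mat W * W = 1\<^sub>m ?n" and cW: "col W 0 = v"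
    using orth_extend[OF v vv] by auto
  have WW': "W * transpose_mat W = 1\<^sub>m ?n"
    using mat_mult_left_right_inverse[OF _ W WW] W by auto
  define A' where "A' = transpose_mat W * A * W"
  have A': "A' \<in> carrier_mat ?n ?n" unfolding A'_def using W A by auto
  have A'sym: "transpose_mat A' = A'"
  proof -
    have "transpose_mat A' = transpose_mat W * transpose_mat (transpose_mat W * A)"
      unfolding A'_def using W A by (subst transpose_mult[of _ ?n ?n], auto)
    also have "transpose_mat (transpose_mat W * A) = transpose_mat A * W"
      using W A by (subst transpose_mult[of _ ?n ?n], auto)
    finally show ?thesis unfolding A'_def Suc.prems(2) using W A
      by (simp add: assoc_mult_mat[of _ ?n ?n _ ?n _ ?n])
  qed
  have col0: "A' $$ (i, 0) = (if i = 0 then e else 0)" if i: "i < ?n" for i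
  proof -
    have "A' $$ (i,0) = (transpose_mat W * (A * W)) $$ (i,0)"
      unfolding A'_def using W A by (simp add: assoc_mult_mat[of _ ?n ?n _ ?n _ ?n])
    also have "\<dots> = col W i \<bullet> col (A * W) 0" using i W A by simp
    also have "col (A * W) 0 = A *\<^sub>v v" using A W cW by (simp add: mult_mat_vec_def)
    also have "\<dots> = e \<cdot>\<^sub>v col W 0" using ev cW by simp
    also have "col W i \<bullet> (e \<cdot>\<^sub>v col W 0) = e * (col W i \<bullet> col W 0)"
      using W i by (simp add: scalar_prod_smult_distrib[of _ ?n])
    also have "col W i \<bullet> col W 0 = (transpose_mat W * W) $$ (i, 0)" using W i by simp
    also have "\<dots> = (if i = 0 then 1 else 0)" using WW i by simp
    finally show ?thesis by simp
  qed
  have row0: "A' $$ (0, j) = (if j = 0 then e else 0)" if j: "j < ?n" for j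
    using col0[OF j] A'sym A' j by (metis carrier_matD index_transpose_mat(1) zero_less_Suc)
  define A3 where "A3 = mat m m (\<lambda>(i,j). A' $$ (Suc i, Suc j))"
  have A3: "A3 \<in> carrier_mat m m" unfolding A3_def by simp
  have A3sym: "transpose_mat A3 = A3"
  proof (rule eq_matI)
    fix i j assume "i < dim_row A3" "j < dim_col A3"
    thus "transpose_mat A3 $$ (i, j) = A3 $$ (i, j)" unfolding A3_def using A'sym A'
      by (metis Suc_less_eq carrier_matD(1,2) dim_col_mat(1) dim_row_mat(1) index_mat(1) index_transpose_mat(1) old.prod.case)
  qed (auto simp: A3_def)
  from Suc.IH[OF A3 A3sym] obtain P3 es3 where P3: "P3 \<in> carrier_mat m m" and les: "length es3 = m"
    and P3P3: "transpose_mat P3 * P3 = 1\<^sub>m m" and P3P3': "P3 * transpose_mat P3 = 1\<^sub>m m"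
    and D3: "transpose_mat P3 * A3 * P3 = diagm es3" by auto
  define E where "E = mat 1 1 (\<lambda>_. e)"
  have E: "E \<in> carrier_mat 1 1" unfolding E_def by auto
  have A'blk: "A' = four_block_mat E (0\<^sub>m 1 m) (0\<^sub>m m 1) A3"
    by (rule eq_matI, insert A' col0 row0, auto simp: E_def A3_def)
  define B where "B = four_block_mat (1\<^sub>m 1) (0\<^sub>m 1 m) (0\<^sub>m m 1) P3"
  have B: "B \<in> carrier_mat ?n ?n" unfolding B_def using P3 by auto
  have BT: "transpose_mat B = four_block_mat (1\<^sub>m 1) (0\<^sub>m 1 m) (0\<^sub>m m 1) (transpose_mat P3)"
    unfolding B_def by (subst transpose_four_block_mat[OF one_carrier_mat zero_carrier_mat zero_carrier_mat P3], simp)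
  have BB: "transpose_mat B * B = 1\<^sub>m ?n"
  proof -
    have "transpose_mat B * B = four_block_mat (1\<^sub>m 1) (0\<^sub>m 1 m) (0\<^sub>m m 1) (transpose_mat P3 * P3)"
      unfolding BT unfolding B_def using P3 by (subst mult_four_block_mat[OF one_carrier_mat zero_carrier_mat zero_carrier_mat _ one_carrier_mat zero_carrier_mat zero_carrier_mat P3], auto)
    also have "\<dots> = 1\<^sub>m ?n" unfolding P3P3 by (rule eq_matI, auto)
    finally show ?thesis .
  qed
  have BAB: "transpose_mat B * A' * B = diagm (e # es3)"
  proof -
    have "transpose_mat B * A' * B = four_block_mat E (0\<^sub>m 1 m) (0\<^sub>m m 1) (transpose_mat P3 * A3 * P3)"
      unfolding BT unfolding B_def A'blk
      using P3 A3 E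
      by (subst mult_four_block_mat[OF one_carrier_mat zero_carrier_mat zero_carrier_mat _ E zero_carrier_mat zero_carrier_mat A3], simp,
          subst mult_four_block_mat[OF _ _ _ _ one_carrier_mat zero_carrier_mat zero_carrier_mat P3], auto)
    also have "\<dots> = diagm (e # es3)" unfolding D3
      by (rule eq_matI, auto simp: E_def diagm_def les)
    finally show ?thesis .
  qed
  define P where "P = W * B"
  have P: "P \<in> carrier_mat ?n ?n" unfolding P_def using W B by auto
  have PT: "transpose_mat P = transpose_mat B * transpose_mat W"
    unfolding P_def using W B by (simp add: transpose_mult)
  have PP: "transpose_mat P * P = 1\<^sub>m ?n"
  proof -
    have "transpose_mat P * P = transpose_mat B * (transpose_mat W * W) * B"
      unfolding PT unfolding P_def using W B by (simp add: assoc_mult_mat[of _ ?n ?n _ ?n _ ?n])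
    thus ?thesis unfolding WW using B BB by simp
  qed
  have PP': "P * transpose_mat P = 1\<^sub>m ?n"
    using mat_mult_left_right_inverse[OF _ P PP] P by auto
  have PAP: "transpose_mat P * A * P = diagm (e # es3)"
  proof -
    have "transpose_mat P * A * P = transpose_mat B * (transpose_mat W * A * W) * B"
      unfolding PT unfolding P_def using W B A by (simp add: assoc_mult_mat[of _ ?n ?n _ ?n _ ?n])
    thus ?thesis using BAB unfolding A'_def by simp
  qed
  show ?case
    by (rule exI[of _ P], rule exI[of _ "e # es3"], insert P PP PP' PAP les, auto)
qed


lemma proots_linear_prod: "proots (\<Prod>a\<leftarrow>es. [:- a, 1:]) = mset (es :: real list)"
proof (induction es)
  case (Cons a es)
  have "(\<Prod>a\<leftarrow>es. [:- a, 1:]) \<noteq> 0"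
    by (auto simp: prod_list_zero_iff)
  hence "proots ([:- a, 1:] * (\<Prod>a\<leftarrow>es. [:- a, 1:])) = proots [:- a, 1:] + proots (\<Prod>a\<leftarrow>es. [:- a, 1:])"
    by (intro proots_mult) auto
  thus ?case using Cons by (simp only: list.map prod_list.Cons proots_linear_factor) simp
qed simp

lemma proots_char_poly_diag:
  assumes A: "A \<in> carrier_mat n n" and P: "P \<in> carrier_mat n n"
    and PP: "transpose_mat P * P = 1\<^sub>m n" and PP': "P * transpose_mat P = 1\<^sub>m n"
    and D: "transpose_mat P * A * P = diagm es" and les: "length es = n"
  shows "proots (char_poly A) = mset es"
proof -
  have "A = (P * transpose_mat P) * A * (P * transpose_mat P)" using A PP' by simp
  also have "\<dots> = P * (transpose_mat P * A * P) * transpose_mat P"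
    using A P by (simp add: assoc_mult_mat[of _ n n _ n _ n])
  finally have "A = P * diagm es * transpose_mat P" unfolding D .
  hence "similar_mat A (diagm es)"
    by (intro similar_matI[of A "diagm es" P "transpose_mat P" n], insert A P PP PP' les, auto)
  hence "char_poly A = char_poly (diagm es)" by (rule char_poly_similar)
  also have "\<dots> = (\<Prod>a\<leftarrow>diag_mat (diagm es). [:- a, 1:])"
    by (rule char_poly_upper_triangular[of _ n], insert les, auto simp: upper_triangular_def diagm_def)
  also have "diag_mat (diagm es) = es"
    by (rule nth_equalityI, auto simp: diag_mat_def diagm_def)
  finally show ?thesis by (simp add: proots_linear_prod)
qed


lemma mat_unit_vec: assumes C: "(C :: real mat) \<in> carrier_mat m k" and i: "i < k"
  shows "C *\<^sub>v unit_vec k i = col C i"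
  by (rule eq_vecI, insert C i, auto)

lemma nontriv_kernel:
  fixes C :: "real mat"
  assumes C: "C \<in> carrier_mat m k" and mk: "m < k"
  shows "\<exists>c \<in> carrier_vec k. c \<noteq> 0\<^sub>v k \<and> C *\<^sub>v c = 0\<^sub>v m"
proof (cases "distinct (cols C)")
  case True
  interpret vec_space "TYPE(real)" m .
  have "lin_dep (set (cols C))"
  proof (rule ccontr)
    assume ind: "\<not> lin_dep (set (cols C))"
    have "set (cols C) \<subseteq> carrier V" using cols_dim[of C] C by (auto simp: carrier_matD)
    hence "card (set (cols C)) \<le> dim" using li_le_dim(2)[OF fin_dim _ ind] by simp
    moreover have "card (set (cols C)) = k" using True C by (simp add: distinct_card)
    ultimately show False using mk dim_is_n by simp
  qed
  from lin_depE[OF C this True] show ?thesis by blast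
next
  case False
  then obtain i j where ij: "i < length (cols C)" "j < length (cols C)" "i \<noteq> j" "cols C ! i = cols C ! j"
    using distinct_conv_nth by blast
  hence ik: "i < k" "j < k" using C by auto
  hence colij: "col C i = col C j" using ij C by auto
  define c where "c = (unit_vec k i - unit_vec k j :: real vec)"
  have c: "c \<in> carrier_vec k" unfolding c_def by simp
  have "c $ i = 1" unfolding c_def using ik ij by simp
  hence c0: "c \<noteq> 0\<^sub>v k" using ik by auto
  have "C *\<^sub>v c = C *\<^sub>v unit_vec k i - C *\<^sub>v unit_vec k j"
    unfolding c_def using C by (simp add: mult_minus_distrib_mat_vec)
  also have "\<dots> = 0\<^sub>v m" unfolding mat_unit_vec[OF C ik(1)] mat_unit_vec[OF C ik(2)] colij
    using C by auto
  finally show ?thesis using c c0 by blast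
qed


lemma quad_diag:
  assumes y: "y \<in> carrier_vec n" and les: "length es = n"
  shows "y \<bullet> (diagm es *\<^sub>v y) = (\<Sum>i<n. es ! i * (y $ i)^2)"
proof -
  have "diagm es *\<^sub>v y = vec n (\<lambda>i. es ! i * y $ i)"
  proof (rule eq_vecI)
    fix i assume "i < dim_vec (vec n (\<lambda>i. es ! i * y $ i))"
    hence i: "i < n" by simp
    have "(diagm es *\<^sub>v y) $ i = (\<Sum>j\<in>{0..<n}. (if i = j then es ! i else 0) * y $ j)"
      using i y les by (auto simp: diagm_def mult_mat_vec_def scalar_prod_def)
    also have "\<dots> = es ! i * y $ i" using i
      by (simp add: if_distrib[of "\<lambda>x. x * _"] sum.delta cong: if_cong)
    finally show "(diagm es *\<^sub>v y) $ i = vec n (\<lambda>i. es ! i * y $ i) $ i" using i by simp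
  qed (insert les, auto simp: diagm_def)
  thus ?thesis using y unfolding scalar_prod_def
    by (auto simp: lessThan_atLeast0 power2_eq_square intro!: sum.cong)
qed

lemma count_nonpos:
  fixes A :: "real mat"
  assumes A: "A \<in> carrier_mat n n" and P: "P \<in> carrier_mat n n"
    and PP': "P * transpose_mat P = 1\<^sub>m n"
    and D: "transpose_mat P * A * P = diagm es" and les: "length es = n"
    and M: "M \<in> carrier_mat n k"
    and H: "\<And>c. c \<in> carrier_vec k \<Longrightarrow> c \<noteq> 0\<^sub>v k \<Longrightarrow>
              M *\<^sub>v c \<noteq> 0\<^sub>v n \<and> (M *\<^sub>v c) \<bullet> (A *\<^sub>v (M *\<^sub>v c)) \<le> 0"
  shows "k \<le> length (filter (\<lambda>x. x \<le> 0) es)"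
proof (rule ccontr)
  define N where "N = {i. i < n \<and> es ! i \<le> 0}"
  have lenN: "length (filter (\<lambda>x. x \<le> 0) es) = card N"
    unfolding N_def length_filter_conv_card les ..
  assume "\<not> k \<le> length (filter (\<lambda>x. x \<le> 0) es)"
  hence mk: "card N < k" unfolding lenN by simp
  define ns where "ns = sorted_list_of_set N"
  have finN: "finite N" unfolding N_def by simp
  have len_ns: "length ns = card N" and set_ns: "set ns = N"
    unfolding ns_def using finN by auto
  define Q where "Q = transpose_mat P * M"
  have Q: "Q \<in> carrier_mat n k" unfolding Q_def using P M by auto
  define C where "C = mat (card N) k (\<lambda>(r,j). Q $$ (ns ! r, j))"
  have C: "C \<in> carrier_mat (card N) k" unfolding C_def by simp
  obtain c where c: "c \<in> carrier_vec k" and c0: "c \<noteq> 0\<^sub>v k" and Cc: "C *\<^sub>v c = 0\<^sub>v (card N)"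
    using nontriv_kernel[OF C mk] by auto
  define x where "x = M *\<^sub>v c"
  define y where "y = transpose_mat P *\<^sub>v x"
  have x: "x \<in> carrier_vec n" unfolding x_def using M c by auto
  have y: "y \<in> carrier_vec n" unfolding y_def using P x by auto
  have yQ: "y = Q *\<^sub>v c" unfolding y_def x_def Q_def using P M c
    by (simp add: assoc_mult_mat_vec[of _ n n _ k])
  have yN: "y $ i = 0" if "i \<in> N" for i
  proof -
    from that obtain r where r: "r < card N" "ns ! r = i" using set_ns len_ns
      by (metis in_set_conv_nth)
    have iN: "i < n" using that unfolding N_def by auto
    have "(C *\<^sub>v c) $ r = row C r \<bullet> c" using C r by simp
    also have "row C r = row Q i" using r C Q iN unfolding C_def
      by (intro eq_vecI, auto)
    also have "row Q i \<bullet> c = y $ i" unfolding yQ using Q iN by simp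
    finally show ?thesis using Cc r by simp
  qed
  have x0: "x \<noteq> 0\<^sub>v n" and q: "x \<bullet> (A *\<^sub>v x) \<le> 0" using H[OF c c0] unfolding x_def by auto
  have xPy: "x = P *\<^sub>v y" unfolding y_def using P x PP'
    by (simp add: assoc_mult_mat_vec[of _ n n _ n, symmetric])
  have y0: "y \<noteq> 0\<^sub>v n" using x0 xPy P by auto
  have "x \<bullet> (A *\<^sub>v x) = y \<bullet> (transpose_mat P *\<^sub>v (A *\<^sub>v (P *\<^sub>v y)))"
    unfolding xPy
    using transpose_vec_mult_scalar[of "transpose_mat P" n n "A *\<^sub>v (P *\<^sub>v y)" y] P A y
    by simp
  also have "transpose_mat P *\<^sub>v (A *\<^sub>v (P *\<^sub>v y)) = diagm es *\<^sub>v y"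
    unfolding D[symmetric] using P A y
    by (simp add: assoc_mult_mat_vec[of _ n n _ n])
  also have "y \<bullet> \<dots> = (\<Sum>i<n. es ! i * (y $ i)^2)" by (rule quad_diag[OF y les])
  finally have q2: "(\<Sum>i<n. es ! i * (y $ i)^2) \<le> 0" using q by simp
  obtain i where i: "i < n" "y $ i \<noteq> 0" using y0 y
    by (metis carrier_vecD eq_vecI index_zero_vec(1) index_zero_vec(2))
  have iN: "i \<notin> N" using yN i by auto
  hence ei: "es ! i > 0" using i unfolding N_def by auto
  have nonneg: "es ! j * (y $ j)^2 \<ge> 0" if "j < n" for j
  proof (cases "j \<in> N")
    case True thus ?thesis using yN by simp
  next
    case False thus ?thesis using that unfolding N_def by simp
  qed
  have "(\<Sum>i<n. es ! i * (y $ i)^2) \<ge> es ! i * (y $ i)^2"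
    using i nonneg by (intro member_le_sum) auto
  moreover have "es ! i * (y $ i)^2 > 0" using ei i by simp
  ultimately show False using q2 by linarith
qed


lemma num_eigs_diag:
  assumes A: "A \<in> carrier_mat n n" and P: "P \<in> carrier_mat n n"
    and PP: "transpose_mat P * P = 1\<^sub>m n" and PP': "P * transpose_mat P = 1\<^sub>m n"
    and D: "transpose_mat P * A * P = diagm es" and les: "length es = n"
  shows "num_eigs Q A = length (filter Q es)"
  unfolding num_eigs_def proots_char_poly_diag[OF assms]
  by (metis mset_filter size_mset)

lemma quad_form:
  fixes A :: "real mat"
  assumes A: "A \<in> carrier_mat n n" and x: "x \<in> carrier_vec n"
  shows "x \<bullet> (A *\<^sub>v x) = (\<Sum>i<n. \<Sum>l<n. x $ i * A $$ (i,l) * x $ l)"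
  using A x unfolding scalar_prod_def mult_mat_vec_def
  by (auto simp: lessThan_atLeast0 sum_distrib_left mult.assoc intro!: sum.cong)

lemma adj_carrier: "adj_mat n E \<in> carrier_mat n n" unfolding adj_mat_def by simp

lemma adj_sym: "simple_graph n E \<Longrightarrow> transpose_mat (adj_mat n E) = adj_mat n E"
  unfolding simple_graph_def adj_mat_def by (rule eq_matI, auto)

lemma adj_index: "i < n \<Longrightarrow> l < n \<Longrightarrow> adj_mat n E $$ (i,l) = (if E i l then 1 else 0)"
  unfolding adj_mat_def by simp

lemma mult_mat_vec_index:
  fixes M :: "real mat"
  assumes "M \<in> carrier_mat n k" "c \<in> carrier_vec k" "i < n"
  shows "(M *\<^sub>v c) $ i = (\<Sum>j<k. M $$ (i,j) * c $ j)"
  using assms unfolding mult_mat_vec_def scalar_prod_def by (auto simp: lessThan_atLeast0 intro!: sum.cong)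

lemma adj_nonpos_generic:
  fixes E :: "nat \<Rightarrow> nat \<Rightarrow> bool"
  assumes g: "simple_graph n E" and M: "M \<in> carrier_mat n k"
    and H: "\<And>c. c \<in> carrier_vec k \<Longrightarrow> c \<noteq> 0\<^sub>v k \<Longrightarrow>
              M *\<^sub>v c \<noteq> 0\<^sub>v n \<and> (M *\<^sub>v c) \<bullet> (adj_mat n E *\<^sub>v (M *\<^sub>v c)) \<le> 0"
  shows "k \<le> num_eigs (\<lambda>x. x \<le> 0) (adj_mat n E)"
proof -
  obtain P es where P: "P \<in> carrier_mat n n" and les: "length es = n" and PP: "transpose_mat P * P = 1\<^sub>m n"
    and PP': "P * transpose_mat P = 1\<^sub>m n" and D: "transpose_mat P * adj_mat n E * P = diagm es"
    using spectral[OF adj_carrier adj_sym[OF g]] by auto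
  show ?thesis
    unfolding num_eigs_diag[OF adj_carrier P PP PP' D les]
    by (rule count_nonpos[OF adj_carrier P PP' D les M H])
qed


lemma vec_nonzero_obtain:
  assumes "c \<in> carrier_vec k" "c \<noteq> 0\<^sub>v k"
  obtains t where "t < k" "c $ t \<noteq> 0"
  using assms by (metis carrier_vecD eq_vecI index_zero_vec(1) index_zero_vec(2))

lemma indep_case:
  fixes E :: "nat \<Rightarrow> nat \<Rightarrow> bool"
  assumes g: "simple_graph n E" and R: "R \<subseteq> {0..<n}" and cR: "card R = k"
    and ind: "\<And>v w. v \<in> R \<Longrightarrow> w \<in> R \<Longrightarrow> v \<noteq> w \<Longrightarrow> \<not> E v w"
  shows "k \<le> num_eigs (\<lambda>x. x \<le> 0) (adj_mat n E)"
proof -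
  have finR: "finite R" using R finite_subset by blast
  define rs where "rs = sorted_list_of_set R"
  have rs: "length rs = k" "distinct rs" "set rs = R" unfolding rs_def using finR cR by auto
  have rsn: "rs ! j < n" if "j < k" for j using rs R that nth_mem by fastforce
  define M :: "real mat" where "M = mat n k (\<lambda>(i,j). if i = rs ! j then 1 else 0)"
  have M: "M \<in> carrier_mat n k" unfolding M_def by simp
  show ?thesis
  proof (rule adj_nonpos_generic[OF g M])
    fix c :: "real vec" assume c: "c \<in> carrier_vec k" and c0: "c \<noteq> 0\<^sub>v k"
    define x where "x = M *\<^sub>v c"
    have x: "x \<in> carrier_vec n" unfolding x_def using M c by auto
    have xi: "x $ i = (\<Sum>j<k. (if i = rs ! j then 1 else 0) * c $ j)" if "i < n" for i
      unfolding x_def using mult_mat_vec_index[OF M c that] that unfolding M_def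
      by (auto intro!: sum.cong)
    have xrs: "x $ (rs ! t) = c $ t" if t: "t < k" for t
    proof -
      have "x $ (rs ! t) = (\<Sum>j<k. (if j = t then c $ j else 0))"
        unfolding xi[OF rsn[OF t]] using rs t by (intro sum.cong refl) (auto simp: nth_eq_iff_index_eq)
      thus ?thesis using t by simp
    qed
    have xout: "x $ i = 0" if "i < n" "i \<notin> R" for i
      unfolding xi[OF that(1)] using that rs by (intro sum.neutral) (auto)
    obtain t where t: "t < k" "c $ t \<noteq> 0" using vec_nonzero_obtain[OF c c0] .
    have "x \<noteq> 0\<^sub>v n" using xrs[OF t(1)] t rsn[OF t(1)] by auto
    moreover have "x \<bullet> (adj_mat n E *\<^sub>v x) = 0"
      unfolding quad_form[OF adj_carrier x]
    proof (intro sum.neutral ballI)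
      fix i l assume i: "i \<in> {..<n}" and l: "l \<in> {..<n}"
      show "x $ i * adj_mat n E $$ (i, l) * x $ l = 0"
      proof (cases "i \<in> R \<and> l \<in> R")
        case True
        have "\<not> E i l"
        proof (cases "i = l")
          case True thus ?thesis using g i unfolding simple_graph_def by auto
        next
          case False thus ?thesis using ind \<open>i \<in> R \<and> l \<in> R\<close> by auto
        qed
        thus ?thesis using i l by (simp add: adj_index)
      next
        case False thus ?thesis using xout i l by auto
      qed
    qed
    ultimately show "M *\<^sub>v c \<noteq> 0\<^sub>v n \<and> (M *\<^sub>v c) \<bullet> (adj_mat n E *\<^sub>v (M *\<^sub>v c)) \<le> 0"
      unfolding x_def by simp
  qed
qed

lemma clique_case:
  fixes E :: "nat \<Rightarrow> nat \<Rightarrow> bool"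
  assumes g: "simple_graph n E" and R: "R \<subseteq> {0..<n}" and cR: "card R = Suc k"
    and cl: "\<And>v w. v \<in> R \<Longrightarrow> w \<in> R \<Longrightarrow> v \<noteq> w \<Longrightarrow> E v w"
  shows "k \<le> num_eigs (\<lambda>x. x \<le> 0) (adj_mat n E)"
proof -
  have finR: "finite R" using R finite_subset by blast
  define rs where "rs = sorted_list_of_set R"
  have rs: "length rs = Suc k" "distinct rs" "set rs = R" unfolding rs_def using finR cR by auto
  have rsn: "rs ! j < n" if "j < Suc k" for j using rs R that nth_mem by fastforce
  define M :: "real mat" where "M = mat n k (\<lambda>(i,j). (if i = rs ! Suc j then 1 else 0) - (if i = rs ! 0 then 1 else 0))"
  have M: "M \<in> carrier_mat n k" unfolding M_def by simp
  show ?thesis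
  proof (rule adj_nonpos_generic[OF g M])
    fix c :: "real vec" assume c: "c \<in> carrier_vec k" and c0: "c \<noteq> 0\<^sub>v k"
    define x where "x = M *\<^sub>v c"
    have x: "x \<in> carrier_vec n" unfolding x_def using M c by auto
    have xi: "x $ i = (\<Sum>j<k. ((if i = rs ! Suc j then 1 else 0) - (if i = rs ! 0 then 1 else 0)) * c $ j)" if "i < n" for i
      unfolding x_def using mult_mat_vec_index[OF M c that] that unfolding M_def
      by (auto intro!: sum.cong)
    have xrs: "x $ (rs ! Suc t) = c $ t" if t: "t < k" for t
    proof -
      have rn: "rs ! Suc t < n" using rsn t by simp
      have "x $ (rs ! Suc t) = (\<Sum>j<k. (if j = t then c $ j else 0))"
        unfolding xi[OF rn] using rs t by (intro sum.cong refl) (auto simp: nth_eq_iff_index_eq)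
      thus ?thesis using t by simp
    qed
    have xout: "x $ i = 0" if "i < n" "i \<notin> R" for i
      unfolding xi[OF that(1)] using that rs by (intro sum.neutral) (auto)
    have xsum: "(\<Sum>i<n. x $ i) = 0"
    proof -
      have "(\<Sum>i<n. x $ i) = (\<Sum>j<k. c $ j * (\<Sum>i<n. ((if i = rs ! Suc j then 1 else 0) - (if i = rs ! 0 then 1 else 0))))"
      proof -
        have "(\<Sum>i<n. x $ i) = (\<Sum>i<n. \<Sum>j<k. c $ j * ((if i = rs ! Suc j then 1 else 0) - (if i = rs ! 0 then 1 else 0)))"
          by (intro sum.cong refl, subst xi, auto simp: mult.commute)
        also have "\<dots> = (\<Sum>j<k. \<Sum>i<n. c $ j * ((if i = rs ! Suc j then 1 else 0) - (if i = rs ! 0 then 1 else 0)))"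
          by (rule sum.swap)
        finally show ?thesis by (simp add: sum_distrib_left)
      qed
      also have "\<dots> = 0"
        by (intro sum.neutral ballI, simp add: sum_subtractf sum.delta' rsn)
      finally show ?thesis .
    qed
    obtain t where t: "t < k" "c $ t \<noteq> 0" using vec_nonzero_obtain[OF c c0] .
    have "x \<noteq> 0\<^sub>v n" using xrs[OF t(1)] t rsn[of "Suc t"] by auto
    moreover have "x \<bullet> (adj_mat n E *\<^sub>v x) \<le> 0"
    proof -
      have trm: "x $ i * adj_mat n E $$ (i, l) * x $ l = x $ i * x $ l - (if i = l then (x $ i)^2 else 0)"
        if i: "i < n" and l: "l < n" for i l
      proof (cases "i \<in> R \<and> l \<in> R")
        case True
        show ?thesis
        proof (cases "i = l")
          case True thus ?thesis using g i unfolding simple_graph_def by (auto simp: adj_index power2_eq_square)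
        next
          case False thus ?thesis using cl \<open>i \<in> R \<and> l \<in> R\<close> i l by (auto simp: adj_index)
        qed
      next
        case False thus ?thesis using xout i l by auto
      qed
      have "x \<bullet> (adj_mat n E *\<^sub>v x) = (\<Sum>i<n. \<Sum>l<n. x $ i * x $ l - (if i = l then (x $ i)^2 else 0))"
        unfolding quad_form[OF adj_carrier x] using trm by (auto intro!: sum.cong)
      also have "\<dots> = (\<Sum>i<n. x $ i) * (\<Sum>l<n. x $ l) - (\<Sum>i<n. (x $ i)^2)"
        by (simp add: sum_subtractf sum.delta sum_distrib_left sum_distrib_right mult.commute)
      also have "\<dots> \<le> 0" unfolding xsum by (simp add: sum_nonneg)
      finally show ?thesis .
    qed
    ultimately show "M *\<^sub>v c \<noteq> 0\<^sub>v n \<and> (M *\<^sub>v c) \<bullet> (adj_mat n E *\<^sub>v (M *\<^sub>v c)) \<le> 0"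
      unfolding x_def by simp
  qed
qed


lemma graph_bound: "\<exists>N. \<forall>m\<ge>N. \<forall>E. simple_graph m E \<longrightarrow> k \<le> num_eigs (\<lambda>x. x \<le> 0) (adj_mat m E)"
proof -
  obtain r where r: "\<forall>(V::nat set) (Es::nat set set). finite V \<and> card V \<ge> r \<longrightarrow>
    (\<exists>R \<subseteq> V. card R = Suc k \<and> clique R Es \<or> card R = k \<and> indep R Es)"
    using ramsey2[of "Suc k" k] by blast
  show ?thesis
  proof (intro exI allI impI)
    fix m E assume m: "r \<le> m" and g: "simple_graph m E"
    define Es where "Es = {{i, j} | i j. i < m \<and> j < m \<and> E i j}"
    obtain R where R: "R \<subseteq> {0..<m}" and RR: "card R = Suc k \<and> clique R Es \<or> card R = k \<and> indep R Es"
      using r[rule_format, of "{0..<m}" Es] m by auto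
    have edge: "{v, w} \<in> Es \<longleftrightarrow> E v w" if "v < m" "w < m" for v w
    proof
      assume "{v, w} \<in> Es"
      then obtain i j where "{v, w} = {i, j}" "i < m" "j < m" "E i j" unfolding Es_def by auto
      thus "E v w" using g that unfolding simple_graph_def by (metis doubleton_eq_iff)
    next
      assume "E v w" thus "{v, w} \<in> Es" using that unfolding Es_def by auto
    qed
    from RR show "k \<le> num_eigs (\<lambda>x. x \<le> 0) (adj_mat m E)"
    proof
      assume "card R = Suc k \<and> clique R Es"
      thus ?thesis using R edge
        by (intro clique_case[OF g R]) (auto simp: clique_def subset_iff)
    next
      assume "card R = k \<and> indep R Es"
      thus ?thesis using R edge
        by (intro indep_case[OF g R]) (auto simp: indep_def subset_iff)
    qed
  qed
qed

lemma npo_prop: "n \<ge> NPO k \<Longrightarrow> simple_graph n E \<Longrightarrow> k \<le> num_eigs (\<lambda>x. x \<le> 0) (adj_mat n E)"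
proof -
  assume n: "n \<ge> NPO k" and g: "simple_graph n E"
  obtain N where "\<forall>m\<ge>N. \<forall>E. simple_graph m E \<longrightarrow> k \<le> num_eigs (\<lambda>x. x \<le> 0) (adj_mat m E)"
    using graph_bound by blast
  hence "\<forall>m\<ge>NPO k. \<forall>E. simple_graph m E \<longrightarrow> k \<le> num_eigs (\<lambda>x. x \<le> 0) (adj_mat m E)"
    unfolding NPO_def by (rule LeastI)
  thus ?thesis using n g by blast
qed

lemma lap_num_eigs:
  assumes g: "simple_graph n E" and reg: "regular n E d"
  shows "num_eigs (\<lambda>x. real d \<le> x) (lap_mat n E) = num_eigs (\<lambda>x. x \<le> 0) (adj_mat n E)"
proof -
  obtain P es where P: "P \<in> carrier_mat n n" and les: "length es = n" and PP: "transpose_mat P * P = 1\<^sub>m n"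
    and PP': "P * transpose_mat P = 1\<^sub>m n" and D: "transpose_mat P * adj_mat n E * P = diagm es"
    using spectral[OF adj_carrier adj_sym[OF g]] by auto
  have degm: "deg_mat n E = real d \<cdot>\<^sub>m 1\<^sub>m n"
    by (rule eq_matI, insert reg, auto simp: deg_mat_def regular_def)
  have L: "lap_mat n E \<in> carrier_mat n n" unfolding lap_mat_def deg_mat_def adj_mat_def by auto
  have "transpose_mat P * lap_mat n E * P = transpose_mat P * (real d \<cdot>\<^sub>m 1\<^sub>m n) * P - transpose_mat P * adj_mat n E * P"
  proof -
    have Pt: "transpose_mat P \<in> carrier_mat n n" using P by simp
    have dI: "real d \<cdot>\<^sub>m 1\<^sub>m n \<in> carrier_mat n n" by simp
    show ?thesis unfolding lap_mat_def degm
      unfolding mult_minus_distrib_mat[OF Pt dI adj_carrier]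
      by (rule minus_mult_distrib_mat[OF _ _ P], insert Pt dI adj_carrier[of n E], auto)
  qed
  also have "transpose_mat P * (real d \<cdot>\<^sub>m 1\<^sub>m n) * P = real d \<cdot>\<^sub>m 1\<^sub>m n"
  proof -
    have Pt: "transpose_mat P \<in> carrier_mat n n" using P by simp
    have "transpose_mat P * (real d \<cdot>\<^sub>m 1\<^sub>m n) = real d \<cdot>\<^sub>m transpose_mat P"
      using mult_smult_distrib[OF Pt one_carrier_mat] Pt by simp
    moreover have "(real d \<cdot>\<^sub>m transpose_mat P) * P = real d \<cdot>\<^sub>m (transpose_mat P * P)"
      by (rule mult_smult_assoc_mat[OF Pt P])
    ultimately show ?thesis using PP by simp
  qed
  also have "real d \<cdot>\<^sub>m 1\<^sub>m n - transpose_mat P * adj_mat n E * P = diagm (map (\<lambda>x. real d - x) es)" unfolding D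
    by (rule eq_matI, auto simp: diagm_def les)
  finally have DL: "transpose_mat P * lap_mat n E * P = diagm (map (\<lambda>x. real d - x) es)" .
  have "num_eigs (\<lambda>x. real d \<le> x) (lap_mat n E) = length (filter (\<lambda>x. real d \<le> x) (map (\<lambda>x. real d - x) es))"
    by (rule num_eigs_diag[OF L P PP PP' DL], simp add: les)
  also have "\<dots> = length (filter (\<lambda>x. x \<le> 0) es)" by (simp add: filter_map o_def)
  also have "\<dots> = num_eigs (\<lambda>x. x \<le> 0) (adj_mat n E)"
    by (rule num_eigs_diag[OF adj_carrier P PP PP' D les, symmetric])
  finally show ?thesis .
qed

theorem mainTheorem18:
  fixes n d k :: nat and E :: "nat \<Rightarrow> nat \<Rightarrow> bool"
  assumes "simple_graph n E" and "regular n E d" and "0 < k"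
    and "NPO k \<le> n" and "n < NPO (k + 1)"
  shows "k \<le> num_eigs (\<lambda>x. real d \<le> x) (lap_mat n E)"
  unfolding lap_num_eigs[OF assms(1,2)] using npo_prop[OF assms(4,1)] .

end
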